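(* Let $\lambda_{\max}=1$ and let $F:[0,1]\to\mathbb{R}_+$ be continuously differentiable with $F(0)=0$, such that $F(x)<F^\star$ for all $x\in[0,1)$ and $F'(1)>0$. Then there exist constants $c>0$ and $\varepsilon_0>0$ (depending on $F$) such that for every $\varepsilon\in(0,\varepsilon_0]$ and every stable control policy $\lambda:\mathbb{Z}_+\to[0,1]$ with regret $R(\lambda)\le\varepsilon$, we have $\mathbb{E}_\pi[\bar q]\ge c/\varepsilon$. That is, $q^\star(\varepsilon)=\Omega(1/\varepsilon)$.
   Context: A control policy is a function $\lambda:\mathbb{Z}_+\to[0,\lambda_{\max}]$; it defines a continuous-time birth–death chain on $\mathbb{Z}_+$ with rate $\lambda(q)$ from $q$ to $q+1$ and rate $1$ from $q$ to $q-1$ ($q\ge1$). Let $\mathcal S$ be the set of states reachable from $0$. The policy is stable if $\sum_{i\in\mathcal S}\prod_{q=0}^{i}\lambda(q)<\infty$ (positive recurrence on $\mathcal S$); then $\pi$ is the stationary distribution and $\bar q\sim\pi$. Define $F^\star=\sup\{\mathbb{E}_\alpha[F(X)]:\alpha$ a probability measure on $[0,\lambda_{\max}]$, $X\sim\alpha$, $\mathbb{E}_\alpha[X]\le1\}$, the regret $R(\lambda)=F^\star-\mathbb{E}_\pi[F(\lambda(\bar q))]$, and $q^\star(\varepsilon)=\inf\{\mathbb{E}_\pi[\bar q]: \lambda \text{ stable},\ R(\lambda)\le\varepsilon\}$. *)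

theory Defs
  imports "HOL-Probability.Probability"
begin

text \<open>A control policy is a function lam :: nat => real with values in [0, lmax].
  Birth rate lam q from q to q+1, death rate 1 from q to q-1.\<close>

definition policy :: "real \<Rightarrow> (nat \<Rightarrow> real) \<Rightarrow> bool" where
  "policy lmax lam \<longleftrightarrow> (\<forall>q. 0 \<le> lam q \<and> lam q \<le> lmax)"

definition reach :: "(nat \<Rightarrow> real) \<Rightarrow> nat set" where
  "reach lam = {i. \<forall>q<i. lam q > 0}"

definition stable :: "(nat \<Rightarrow> real) \<Rightarrow> bool" where
  "stable lam \<longleftrightarrow> (\<lambda>i. \<Prod>q\<le>i. lam q) summable_on reach lam"

definition stationary_dist :: "(nat \<Rightarrow> real) \<Rightarrow> (nat \<Rightarrow> real) \<Rightarrow> bool" where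
  "stationary_dist lam \<pi> \<longleftrightarrow>
     (\<forall>i. 0 \<le> \<pi> i) \<and> (\<forall>i. i \<notin> reach lam \<longrightarrow> \<pi> i = 0) \<and>
     \<pi> sums 1 \<and>
     \<pi> 0 * lam 0 = \<pi> 1 \<and>
     (\<forall>j\<ge>1. \<pi> j * (lam j + 1) = \<pi> (j - 1) * lam (j - 1) + \<pi> (j + 1))"

definition Fstar :: "real \<Rightarrow> (real \<Rightarrow> real) \<Rightarrow> real" where
  "Fstar lmax F = (SUP \<alpha> \<in> {\<alpha>. prob_space \<alpha> \<and> space \<alpha> = {0..lmax} \<and>
                        sets \<alpha> = sets (restrict_space borel {0..lmax}) \<and>
                        (\<integral>x. x \<partial>\<alpha>) \<le> 1}.
                   (\<integral>x. F x \<partial>\<alpha>))"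

definition regret :: "real \<Rightarrow> (real \<Rightarrow> real) \<Rightarrow> (nat \<Rightarrow> real) \<Rightarrow> (nat \<Rightarrow> real) \<Rightarrow> real" where
  "regret lmax F lam \<pi> = Fstar lmax F - (\<Sum>i. \<pi> i * F (lam i))"

definition mean_queue :: "(nat \<Rightarrow> real) \<Rightarrow> ennreal" where
  "mean_queue \<pi> = (\<Sum>i. ennreal (real i * \<pi> i))"

end

theory Submission
  imports Defs
begin

lemma key_k:
  fixes F F' :: "real \<Rightarrow> real" and S :: real
  assumes deriv: "\<forall>x\<in>{0..1}. (F has_real_derivative F' x) (at x within {0..1})"
    and pos: "F' 1 > 0" and below: "\<forall>x\<in>{0..<1}. F x < S"
  shows "\<exists>k>0. \<forall>x\<in>{0..1}. F x \<le> S - k*(1-x)"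
proof -
  have cont: "continuous_on {0..1} F"
    by (rule DERIV_continuous_on) (use deriv in auto)
  have cl: "closed {x \<in> {0..1}. F x \<le> (\<lambda>_. S) x}"
    by (rule continuous_on_closed_Collect_le) (use cont in auto)
  have "{0..<1} \<subseteq> {x \<in> {0..1}. F x \<le> (\<lambda>_. S) x}"
    using below by (auto simp: less_imp_le)
  hence "closure {0..<(1::real)} \<subseteq> {x \<in> {0..1}. F x \<le> (\<lambda>_. S) x}"
    using cl by (rule closure_minimal)
  hence F1: "F 1 \<le> S" by (auto dest!: subsetD[of _ _ 1])
  define d where "d = F' 1"
  have "((\<lambda>y. (F y - F 1) / (y - 1)) \<longlongrightarrow> d) (at 1 within {0..1})"
    using deriv[rule_format, of 1] unfolding d_def has_field_derivative_iff by simp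
  hence "eventually (\<lambda>y. (F y - F 1) / (y - 1) > d/2) (at 1 within {0..1})"
    using pos d_def by (intro order_tendstoD) auto
  then obtain \<delta> where dpos: "\<delta> > 0" and dH:
    "\<forall>y\<in>{0..1}. y \<noteq> 1 \<and> dist y 1 < \<delta> \<longrightarrow> (F y - F 1) / (y - 1) > d/2"
    unfolding eventually_at by auto
  define a where "a = max 0 (1 - \<delta>/2)"
  have a1: "a < 1" "0 \<le> a" using dpos a_def by auto
  have "continuous_on {0..a} (\<lambda>x. S - F x)"
    using cont a1 by (intro continuous_intros) (auto elim: continuous_on_subset)
  then obtain x0 where x0: "x0 \<in> {0..a}" and x0m: "\<forall>y\<in>{0..a}. S - F x0 \<le> S - F y"
    using continuous_attains_inf[of "{0..a}" "\<lambda>x. S - F x"] a1 by auto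
  define m where "m = S - F x0"
  have mpos: "m > 0" using x0 a1 below m_def by auto
  define k where "k = min (d/2) m"
  have kpos: "k > 0" using mpos pos d_def k_def by auto
  have "\<forall>x\<in>{0..1}. F x \<le> S - k*(1-x)"
  proof
    fix x :: real assume x: "x \<in> {0..1}"
    show "F x \<le> S - k*(1-x)"
    proof (cases "x \<le> a")
      case True
      hence "S - F x \<ge> m" using x0m x m_def by auto
      moreover have "k*(1-x) \<le> k" using x kpos by (simp add: mult_left_le)
      moreover have "k \<le> m" using k_def by auto
      ultimately show ?thesis by linarith
    next
      case False
      show ?thesis
      proof (cases "x = 1")
        case True thus ?thesis using F1 by simp
      next
        case ne: False
        have "dist x 1 < \<delta>" using False x a_def dpos by (auto simp: dist_real_def)
        hence q: "(F x - F 1) / (x - 1) > d/2" using dH x ne by auto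
        have xl: "x < 1" using x ne by auto
        have "(F x - F 1) / (x - 1) = (F 1 - F x) / (1 - x)"
          by (simp add: divide_simps) (auto simp: algebra_simps)
        with q have "(F 1 - F x) / (1 - x) > d/2" by simp
        hence "F 1 - F x > d/2 * (1 - x)" using xl by (simp add: field_simps)
        moreover have "k * (1-x) \<le> d/2 * (1-x)" using xl k_def by (intro mult_right_mono) auto
        ultimately show ?thesis using F1 by linarith
      qed
    qed
  qed
  thus ?thesis using kpos by blast
qed

lemma db:
  assumes "stationary_dist lam \<pi>"
  shows "\<pi> (Suc i) = \<pi> i * lam i"
proof (induction i)
  case 0 then show ?case using assms unfolding stationary_dist_def by simp
next
  case (Suc i)
  have H: "\<forall>j\<ge>1. \<pi> j * (lam j + 1) = \<pi> (j - 1) * lam (j - 1) + \<pi> (j + 1)"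
    using assms unfolding stationary_dist_def by blast
  have "\<pi> (Suc i) * (lam (Suc i) + 1) = \<pi> i * lam i + \<pi> (Suc (Suc i))"
    using H[rule_format, of "Suc i"] by simp
  with Suc show ?case by (simp add: algebra_simps)
qed

lemma mono_pi:
  assumes "stationary_dist lam \<pi>" "policy 1 lam"
  shows "\<pi> i \<le> \<pi> 0"
proof (induction i)
  case 0 then show ?case by simp
next
  case (Suc i)
  have "\<pi> (Suc i) = \<pi> i * lam i" using db[OF assms(1)] .
  also have "\<dots> \<le> \<pi> i" using assms unfolding stationary_dist_def policy_def
    by (simp add: mult_left_le)
  finally show ?case using Suc by simp
qed

theorem proposition5p1:
  fixes F :: "real \<Rightarrow> real"
  assumes nonneg: "\<forall>x\<in>{0..1}. 0 \<le> F x"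
    and C1: "\<exists>F'. (\<forall>x\<in>{0..1}. (F has_real_derivative F' x) (at x within {0..1}))
                 \<and> continuous_on {0..1} F' \<and> F' 1 > 0"
    and F0: "F 0 = 0"
    and below: "\<forall>x\<in>{0..<1}. F x < Fstar 1 F"
  shows "\<exists>c>0. \<exists>\<epsilon>0>0. \<forall>\<epsilon>. 0 < \<epsilon> \<and> \<epsilon> \<le> \<epsilon>0 \<longrightarrow>
           (\<forall>lam \<pi>. policy 1 lam \<and> stable lam \<and> stationary_dist lam \<pi> \<and>
                     regret 1 F lam \<pi> \<le> \<epsilon> \<longrightarrow> ennreal (c / \<epsilon>) \<le> mean_queue \<pi>)"
proof -
  define S where "S = Fstar 1 F"
  obtain F' where d: "\<forall>x\<in>{0..1}. (F has_real_derivative F' x) (at x within {0..1})"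
    and p: "F' 1 > 0" using C1 by blast
  obtain k where kpos: "k > 0" and kb: "\<forall>x\<in>{0..1}. F x \<le> S - k*(1-x)"
    using key_k[OF d p] below S_def by blast
  have S0: "S \<ge> 0" using kb[rule_format, of 1] nonneg[rule_format, of 1] by simp
  have main: "ennreal ((k/8) / \<epsilon>) \<le> mean_queue \<pi>"
    if e: "0 < \<epsilon>" "\<epsilon> \<le> k/2" and pol: "policy 1 lam" and st: "stationary_dist lam \<pi>"
      and rg: "regret 1 F lam \<pi> \<le> \<epsilon>" for \<epsilon> lam \<pi>
  proof -
    have pn: "\<And>i. 0 \<le> \<pi> i" and s1: "\<pi> sums 1" using st unfolding stationary_dist_def by auto
    have lb: "\<And>i. 0 \<le> lam i \<and> lam i \<le> 1" using pol unfolding policy_def by auto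
    have dbi: "\<And>i. \<pi> (Suc i) = \<pi> i * lam i" using db[OF st] .
    have mo: "\<And>i. \<pi> i \<le> \<pi> 0" using mono_pi[OF st pol] .
    define g where "g i = \<pi> i * (S - k) + k * \<pi> (Suc i)" for i
    have sS: "(\<lambda>i. \<pi> (Suc i)) sums (1 - \<pi> 0)" using s1 sums_Suc_iff[of \<pi> "1 - \<pi> 0"] by simp
    have gs0: "g sums (1 * (S - k) + k * (1 - \<pi> 0))"
      unfolding g_def
      by (rule sums_add[OF sums_mult2[OF s1, of "S - k"] sums_mult[OF sS, of k]])
    have gs: "g sums ((S - k) * 1 + k * (1 - \<pi> 0))"
      using gs0 by simp
    have tl: "\<pi> i * F (lam i) \<le> g i" for i
    proof -
      have "\<pi> i * F (lam i) \<le> \<pi> i * (S - k*(1 - lam i))"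
        using kb lb[of i] pn[of i] by (intro mult_left_mono) auto
      also have "\<dots> = g i" unfolding g_def using dbi[of i] by (simp add: algebra_simps)
      finally show ?thesis .
    qed
    have sf: "summable (\<lambda>i. \<pi> i * F (lam i))"
    proof (rule summable_comparison_test)
      show "\<exists>N. \<forall>n\<ge>N. norm (\<pi> n * F (lam n)) \<le> \<pi> n * S"
      proof (intro exI allI impI)
        fix n :: nat
        have "0 \<le> \<pi> n * F (lam n)" using pn[of n] nonneg lb[of n] by auto
        moreover have "\<pi> n * F (lam n) \<le> \<pi> n * S"
        proof -
          have "F (lam n) \<le> S - k*(1 - lam n)" using kb lb[of n] by auto
          moreover have "k*(1 - lam n) \<ge> 0" using kpos lb[of n] by simp
          ultimately have "F (lam n) \<le> S" by linarith
          thus ?thesis using pn[of n] by (rule mult_left_mono)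
        qed
        ultimately show "norm (\<pi> n * F (lam n)) \<le> \<pi> n * S" by simp
      qed
      show "summable (\<lambda>n. \<pi> n * S)" using s1 by (intro summable_mult2) (auto simp: sums_iff)
    qed
    have "(\<Sum>i. \<pi> i * F (lam i)) \<le> (\<Sum>i. g i)"
      using tl sf gs by (intro suminf_le) (auto simp: sums_iff)
    also have "\<dots> = S - k * \<pi> 0" using gs by (simp add: sums_iff algebra_simps)
    finally have "k * \<pi> 0 \<le> \<epsilon>" using rg unfolding regret_def S_def by simp
    hence p0: "\<pi> 0 \<le> \<epsilon> / k" using kpos by (simp add: field_simps)
    define x where "x = k / (2*\<epsilon>)"
    have x1: "x \<ge> 1" using e unfolding x_def by (simp add: le_divide_eq)
    define N where "N = nat \<lfloor>x\<rfloor>"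
    have RN: "real N = of_int \<lfloor>x\<rfloor>" using x1 N_def by simp
    have Nle: "real N \<le> x" using RN by linarith
    have Nge: "real N \<ge> x / 2"
    proof -
      have "of_int \<lfloor>x\<rfloor> \<ge> (1::real)" using x1 by simp
      moreover have "of_int \<lfloor>x\<rfloor> > x - 1" by linarith
      ultimately show ?thesis using RN by linarith
    qed
    have Np: "real N * \<pi> 0 \<le> 1/2"
    proof -
      have "real N * \<pi> 0 \<le> x * (\<epsilon> / k)"
        using Nle p0 pn[of 0] x1 by (intro mult_mono) auto
      also have "\<dots> = 1/2" using x_def e kpos by (simp add: field_simps)
      finally show ?thesis .
    qed
    define h where "h i = real N * \<pi> i - (if i \<in> {..<N} then real N * \<pi> 0 else 0)" for i
    have hs: "h sums (real N * 1 - (\<Sum>i<N. real N * \<pi> 0))"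
    proof -
      have a1: "(\<lambda>i. real N * \<pi> i) sums (real N * 1)" by (rule sums_mult[OF s1])
      have a2: "(\<lambda>i. if i \<in> {..<N} then real N * \<pi> 0 else 0) sums (\<Sum>i<N. real N * \<pi> 0)"
        by (rule sums_If_finite_set) simp
      show ?thesis unfolding h_def by (rule sums_diff[OF a1 a2])
    qed
    have hval: "real N * 1 - (\<Sum>i<N. real N * \<pi> 0) = real N * (1 - real N * \<pi> 0)"
      by (simp add: algebra_simps)
    have hbound: "real N * (1 - real N * \<pi> 0) \<ge> (k/8)/\<epsilon>"
    proof -
      have "real N * (1 - real N * \<pi> 0) \<ge> real N * (1/2)"
        using Np by (intro mult_left_mono) auto
      moreover have "real N * (1/2) \<ge> x/4" using Nge by simp
      moreover have "x/4 = (k/8)/\<epsilon>" using x_def by (simp add: field_simps)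
      ultimately show ?thesis by linarith
    qed
    have th: "h i \<le> real i * \<pi> i" for i
    proof (cases "i < N")
      case True
      have "real N * \<pi> i \<le> real N * \<pi> 0" using mo[of i] by (intro mult_left_mono) auto
      moreover have "0 \<le> real i * \<pi> i" using pn[of i] by simp
      moreover have "h i = real N * \<pi> i - real N * \<pi> 0" using True h_def by simp
      ultimately show ?thesis by linarith
    next
      case False
      have "real N * \<pi> i \<le> real i * \<pi> i" using False pn[of i] by (intro mult_right_mono) auto
      thus ?thesis using False unfolding h_def by auto
    qed
    show ?thesis
    proof (cases "summable (\<lambda>i. real i * \<pi> i)")
      case True
      have "mean_queue \<pi> = ennreal (\<Sum>i. real i * \<pi> i)"
        unfolding mean_queue_def using True pn by (intro suminf_ennreal2) auto
      moreover have "(\<Sum>i. h i) \<le> (\<Sum>i. real i * \<pi> i)"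
        using th hs True by (intro suminf_le) (auto simp: sums_iff)
      moreover have "(\<Sum>i. h i) = real N * (1 - real N * \<pi> 0)" using hs hval by (simp add: sums_iff)
      ultimately have "(k/8)/\<epsilon> \<le> (\<Sum>i. real i * \<pi> i)" and
        mq: "mean_queue \<pi> = ennreal (\<Sum>i. real i * \<pi> i)" using hbound by linarith+
      then show ?thesis by (simp add: ennreal_leI)
    next
      case False
      have nn: "\<And>i. 0 \<le> real i * \<pi> i" using pn by simp
      have "mean_queue \<pi> = top"
        unfolding mean_queue_def using summable_suminf_not_top[of "\<lambda>i. real i * \<pi> i", OF nn] False by blast
      thus ?thesis by simp
    qed
  qed
  have "k/8 > 0" "k/2 > 0" using kpos by auto
  moreover have "\<forall>\<epsilon>. 0 < \<epsilon> \<and> \<epsilon> \<le> k/2 \<longrightarrow>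
           (\<forall>lam \<pi>. policy 1 lam \<and> stable lam \<and> stationary_dist lam \<pi> \<and>
                     regret 1 F lam \<pi> \<le> \<epsilon> \<longrightarrow> ennreal ((k/8) / \<epsilon>) \<le> mean_queue \<pi>)"
    using main by blast
  ultimately show ?thesis by blast
qed

end
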